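(* On an open set of $\mathbb C^2$, let $\omega=f(x,y)\,dx\wedge dy$ with $f$ a nonvanishing holomorphic function. The Hess connection of the bi-Lagrangian manifold $(\mathbb C^2,\omega,\ker(dx),\ker(dy))$ is flat if and only if $$\frac{\partial^2 f}{\partial x\,\partial y}\cdot f=\frac{\partial f}{\partial x}\cdot\frac{\partial f}{\partial y}.$$
   Context: The Hess connection of a bi-Lagrangian manifold $(M,\omega,\mathcal F_1,\mathcal F_2)$ (holomorphic symplectic $\omega$, transversal Lagrangian foliations) is the unique torsion-free affine connection $\nabla$ with $X\cdot\omega(Y,Z)=\omega(\nabla_XY,Z)+\omega(Y,\nabla_XZ)$ for all vector fields and with $\nabla_XY$ tangent to $\mathcal F_j$ whenever $Y$ is ($j=1,2$). It is flat if its curvature $R(X,Y)Z=\nabla_X\nabla_YZ-\nabla_Y\nabla_XZ-\nabla_{[X,Y]}Z$ vanishes identically. *)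

theory Defs
  imports "HOL-Analysis.Analysis"
begin

type_synonym pt = "complex \<times> complex"

definition comp :: "nat \<Rightarrow> pt \<Rightarrow> complex" where
  "comp i v = (if i = 0 then fst v else snd v)"

text \<open>Holomorphic function on an open subset of C^2: complex Frechet differentiable.\<close>
definition holo2 :: "pt set \<Rightarrow> (pt \<Rightarrow> complex) \<Rightarrow> bool" where
  "holo2 U g \<longleftrightarrow> (\<forall>p\<in>U. \<exists>L. (g has_derivative L) (at p) \<and>
      (\<forall>c v. L (c * fst v, c * snd v) = c * L v))"

text \<open>Holomorphic vector field on U (components w.r.t. d/dx, d/dy).\<close>
definition hvf :: "pt set \<Rightarrow> (pt \<Rightarrow> pt) \<Rightarrow> bool" where
  "hvf U X \<longleftrightarrow> holo2 U (\<lambda>q. fst (X q)) \<and> holo2 U (\<lambda>q. snd (X q))"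

definition pd :: "nat \<Rightarrow> (pt \<Rightarrow> complex) \<Rightarrow> pt \<Rightarrow> complex" where
  "pd i g p = (if i = 0 then deriv (\<lambda>t. g (t, snd p)) (fst p)
               else deriv (\<lambda>t. g (fst p, t)) (snd p))"

definition vd :: "(pt \<Rightarrow> pt) \<Rightarrow> (pt \<Rightarrow> complex) \<Rightarrow> pt \<Rightarrow> complex" where
  "vd X g p = (\<Sum>i<2. comp i (X p) * pd i g p)"

definition bracket :: "(pt \<Rightarrow> pt) \<Rightarrow> (pt \<Rightarrow> pt) \<Rightarrow> pt \<Rightarrow> pt" where
  "bracket X Y p =
     (vd X (\<lambda>q. fst (Y q)) p - vd Y (\<lambda>q. fst (X q)) p,
      vd X (\<lambda>q. snd (Y q)) p - vd Y (\<lambda>q. snd (X q)) p)"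

text \<open>Affine connection on an open subset of C^2, given by its Christoffel symbols
  G k i j (so that nabla_{d_i} d_j = sum_k G k i j d_k).\<close>
type_synonym chr = "nat \<Rightarrow> nat \<Rightarrow> nat \<Rightarrow> pt \<Rightarrow> complex"

definition nabla :: "chr \<Rightarrow> (pt \<Rightarrow> pt) \<Rightarrow> (pt \<Rightarrow> pt) \<Rightarrow> pt \<Rightarrow> pt" where
  "nabla G X Y p =
     (let c = (\<lambda>k. vd X (\<lambda>q. comp k (Y q)) p
                + (\<Sum>i<2. \<Sum>j<2. G k i j p * comp i (X p) * comp j (Y p)))
      in (c 0, c 1))"

definition omega :: "(pt \<Rightarrow> complex) \<Rightarrow> pt \<Rightarrow> pt \<Rightarrow> pt \<Rightarrow> complex" where
  "omega f p u v = f p * (fst u * snd v - snd u * fst v)"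

definition is_hess :: "pt set \<Rightarrow> (pt \<Rightarrow> complex) \<Rightarrow> chr \<Rightarrow> bool" where
  "is_hess U f G \<longleftrightarrow>
     (\<forall>k<2. \<forall>i<2. \<forall>j<2. holo2 U (G k i j)) \<and>
     (\<forall>X Y. hvf U X \<longrightarrow> hvf U Y \<longrightarrow>
        (\<forall>p\<in>U. nabla G X Y p - nabla G Y X p = bracket X Y p)) \<and>
     (\<forall>X Y Z. hvf U X \<longrightarrow> hvf U Y \<longrightarrow> hvf U Z \<longrightarrow>
        (\<forall>p\<in>U. vd X (\<lambda>q. omega f q (Y q) (Z q)) p
                = omega f p (nabla G X Y p) (Z p) + omega f p (Y p) (nabla G X Z p))) \<and>
     (\<forall>X Y. hvf U X \<longrightarrow> hvf U Y \<longrightarrow> (\<forall>p\<in>U. fst (Y p) = 0) \<longrightarrow>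
        (\<forall>p\<in>U. fst (nabla G X Y p) = 0)) \<and>
     (\<forall>X Y. hvf U X \<longrightarrow> hvf U Y \<longrightarrow> (\<forall>p\<in>U. snd (Y p) = 0) \<longrightarrow>
        (\<forall>p\<in>U. snd (nabla G X Y p) = 0))"

definition curv :: "chr \<Rightarrow> (pt \<Rightarrow> pt) \<Rightarrow> (pt \<Rightarrow> pt) \<Rightarrow> (pt \<Rightarrow> pt) \<Rightarrow> pt \<Rightarrow> pt" where
  "curv G X Y Z p = nabla G X (nabla G Y Z) p - nabla G Y (nabla G X Z) p
                    - nabla G (bracket X Y) Z p"

definition flat_conn :: "pt set \<Rightarrow> chr \<Rightarrow> bool" where
  "flat_conn U G \<longleftrightarrow> (\<forall>X Y Z. hvf U X \<longrightarrow> hvf U Y \<longrightarrow> hvf U Z \<longrightarrow>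
      (\<forall>p\<in>U. curv G X Y Z p = 0))"

end

theory Submission
  imports Defs "HOL-Complex_Analysis.Complex_Analysis"
begin

lemma cint_param_cont:
  fixes F :: "'a::metric_space \<Rightarrow> complex \<Rightarrow> complex"
  assumes cont: "continuous_on (K \<times> sphere c r) (\<lambda>x. F (fst x) (snd x))" and r: "0 < r"
  shows "continuous_on K (\<lambda>q. contour_integral (circlepath c r) (F q))"
  unfolding continuous_on_def
proof (intro ballI)
  fix q0 assume q0: "q0 \<in> K"
  show "((\<lambda>q. contour_integral (circlepath c r) (F q)) \<longlongrightarrow> contour_integral (circlepath c r) (F q0)) (at q0 within K)"
  proof (cases "trivial_limit (at q0 within K)")
    case True then show ?thesis by simp
  next
    case False
    have ci: "F q contour_integrable_on circlepath c r" if "q \<in> K" for q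
    proof (rule contour_integrable_continuous_circlepath)
      have "continuous_on (sphere c r) (\<lambda>w. (\<lambda>x. F (fst x) (snd x)) (q, w))"
        by (rule continuous_on_compose2[OF cont]) (auto intro!: continuous_intros simp: that)
      then show "continuous_on (path_image (circlepath c r)) (F q)" using r by simp
    qed
    have ev: "\<forall>\<^sub>F q in at q0 within K. F q contour_integrable_on circlepath c r"
      unfolding eventually_at_filter by (auto intro!: always_eventually ci)
    have ul: "uniform_limit (sphere c r) F (F q0) (at q0 within K)"
      unfolding uniform_limit_iff
    proof (intro allI impI)
      fix e :: real assume e: "0 < e"
      obtain X0 where X0: "q0 \<in> X0" "open X0"
        "\<forall>x\<in>X0 \<inter> K. \<forall>t \<in> sphere c r. dist ((\<lambda>x. F (fst x) (snd x)) (x, t)) ((\<lambda>x. F (fst x) (snd x)) (q0, t)) \<le> e/2"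
        using continuous_on_prod_compactE[OF cont compact_sphere q0, of "e/2"] e by auto
      have "\<forall>\<^sub>F q in nhds q0. q \<in> X0" using X0 eventually_nhds by blast
      then show "\<forall>\<^sub>F q in at q0 within K. \<forall>x\<in>sphere c r. dist (F q x) (F q0 x) < e"
        unfolding eventually_at_filter
      proof (rule eventually_mono)
        fix q assume "q \<in> X0"
        show "q \<noteq> q0 \<longrightarrow> q \<in> K \<longrightarrow> (\<forall>x\<in>sphere c r. dist (F q x) (F q0 x) < e)"
        proof (intro impI ballI)
          fix x assume "q \<in> K" "x \<in> sphere c r"
          then have "dist (F q x) (F q0 x) \<le> e/2" using X0(3) \<open>q \<in> X0\<close> by fastforce
          then show "dist (F q x) (F q0 x) < e" using e by linarith
        qed
      qed
    qed
    show ?thesis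
      by (rule contour_integral_uniform_limit_circlepath(2)[OF ev ul False r])
  qed
qed

definition psi :: "(pt \<Rightarrow> complex) \<Rightarrow> complex \<Rightarrow> real \<Rightarrow> nat \<Rightarrow> complex \<Rightarrow> complex \<Rightarrow> complex" where
  "psi g b R n u y = contour_integral (circlepath b R) (\<lambda>w. g (u,w) / (w-y)^n)"

definition Phi :: "(pt \<Rightarrow> complex) \<Rightarrow> complex \<Rightarrow> complex \<Rightarrow> real \<Rightarrow> nat \<Rightarrow> nat \<Rightarrow> complex \<Rightarrow> complex \<Rightarrow> complex" where
  "Phi g a b R m n x y = contour_integral (circlepath a R) (\<lambda>u. psi g b R n u y / (u-x)^m)"

context
  fixes g :: "pt \<Rightarrow> complex" and a b :: complex and R :: real
  assumes gc: "continuous_on (cball a R \<times> cball b R) g" and R: "0 < R"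
begin

lemma psi_cont: "continuous_on (sphere a R \<times> ball b R) (\<lambda>q. psi g b R n (fst q) (snd q))"
proof -
  have "continuous_on ((sphere a R \<times> ball b R) \<times> sphere b R) (\<lambda>x. g (fst (fst x), snd x) / (snd x - snd (fst x))^n)"
  proof (intro continuous_intros)
    show "continuous_on ((sphere a R \<times> ball b R) \<times> sphere b R) (\<lambda>x. g (fst (fst x), snd x))"
      by (rule continuous_on_compose2[OF gc]) (auto intro!: continuous_intros)
  qed (auto simp: dist_commute)
  then have "continuous_on (sphere a R \<times> ball b R) (\<lambda>q. contour_integral (circlepath b R) ((\<lambda>q w. g (fst q, w) / (w - snd q)^n) q))"
    by (intro cint_param_cont[OF _ R]) simp
  then show ?thesis by (simp add: psi_def)
qed

lemma psi_cont1: "y \<in> ball b R \<Longrightarrow> continuous_on (sphere a R) (\<lambda>u. psi g b R n u y)"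
  by (rule continuous_on_compose2[OF psi_cont, of _ "\<lambda>u. (u,y)", simplified]) (auto intro!: continuous_intros)

lemma Phi_cont: "continuous_on (ball a R \<times> ball b R) (\<lambda>q. Phi g a b R m n (fst q) (snd q))"
proof -
  have "continuous_on ((ball a R \<times> ball b R) \<times> sphere a R) (\<lambda>x. psi g b R n (snd x) (snd (fst x)) / (snd x - fst (fst x))^m)"
  proof (intro continuous_intros)
    show "continuous_on ((ball a R \<times> ball b R) \<times> sphere a R) (\<lambda>x. psi g b R n (snd x) (snd (fst x)))"
      by (rule continuous_on_compose2[OF psi_cont, of _ "\<lambda>x. (snd x, snd (fst x))", simplified]) (auto intro!: continuous_intros)
  qed (auto simp: dist_commute)
  then have "continuous_on (ball a R \<times> ball b R) (\<lambda>q. contour_integral (circlepath a R) ((\<lambda>q u. psi g b R n u (snd q) / (u - fst q)^m) q))"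
    by (intro cint_param_cont[OF _ R]) simp
  then show ?thesis by (simp add: Phi_def)
qed

lemma Phi_dx:
  assumes x: "x \<in> ball a R" and y: "y \<in> ball b R" and m: "m \<noteq> 0"
  shows "((\<lambda>x. Phi g a b R m n x y) has_field_derivative (of_nat m * Phi g a b R (Suc m) n x y)) (at x)"
proof -
  have pc: "continuous_on (path_image (circlepath a R)) (\<lambda>u. psi g b R n u y)"
    using psi_cont1[OF y] R by simp
  have int: "((\<lambda>u. psi g b R n u y / (u-w)^m) has_contour_integral Phi g a b R m n w y) (circlepath a R)"
    if "w \<in> ball a R" for w
  proof -
    have "continuous_on (path_image (circlepath a R)) (\<lambda>u. psi g b R n u y / (u-w)^m)"
      using that R by (intro continuous_intros pc) (auto simp: dist_commute)
    then show ?thesis unfolding Phi_def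
      by (intro has_contour_integral_integral contour_integrable_continuous_circlepath)
  qed
  show ?thesis
    using Cauchy_next_derivative_circlepath(2)[OF pc int m x] by (simp add: Phi_def)
qed

lemma Phi_swap:
  assumes x: "x \<in> ball a R" and y: "y \<in> ball b R"
  shows "Phi g a b R m n x y = Phi (\<lambda>q. g (snd q, fst q)) b a R n m y x"
proof -
  define F where "F = (\<lambda>u w. g (u,w) / (w-y)^n / (u-x)^m)"
  have Fc: "continuous_on (sphere a R \<times> sphere b R) (\<lambda>q. F (fst q) (snd q))"
    unfolding F_def
  proof (intro continuous_intros)
    show "continuous_on (sphere a R \<times> sphere b R) (\<lambda>q. g (fst q, snd q))"
      using continuous_on_subset[OF gc, of "sphere a R \<times> sphere b R"] by (simp add: Sigma_mono sphere_cball)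
  qed (use x y in \<open>auto simp: dist_commute\<close>)
  have vd: "continuous_on {0..1} (\<lambda>t. vector_derivative (circlepath c R) (at t))" for c
    by (simp add: vector_derivative_circlepath) (intro continuous_intros)
  have "Phi g a b R m n x y = contour_integral (circlepath a R) (\<lambda>u. contour_integral (circlepath b R) (F u))"
    unfolding Phi_def psi_def
  proof (rule contour_integral_eq)
    fix u assume u: "u \<in> path_image (circlepath a R)"
    have "continuous_on (path_image (circlepath b R)) (\<lambda>w. g (u,w) / (w-y)^n)"
    proof (intro continuous_intros)
      show "continuous_on (path_image (circlepath b R)) (\<lambda>w. g (u, w))"
        by (rule continuous_on_compose2[OF gc]) (use u R in \<open>auto intro!: continuous_intros\<close>)
    qed (use y R in \<open>auto simp: dist_commute\<close>)
    then show "contour_integral (circlepath b R) (\<lambda>w. g (u, w) / (w - y) ^ n) / (u - x) ^ m =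
          contour_integral (circlepath b R) (F u)"
      unfolding F_def by (intro contour_integral_div[symmetric] contour_integrable_continuous_circlepath)
  qed
  also have "\<dots> = contour_integral (circlepath b R) (\<lambda>w. contour_integral (circlepath a R) (\<lambda>u. F u w))"
    by (rule contour_integral_swap) (use Fc R vd in \<open>auto simp: case_prod_beta\<close>)
  also have "\<dots> = Phi (\<lambda>q. g (snd q, fst q)) b a R n m y x"
    unfolding Phi_def psi_def
  proof (rule contour_integral_eq)
    fix w assume w: "w \<in> path_image (circlepath b R)"
    have "continuous_on (path_image (circlepath a R)) (\<lambda>u. g (u,w) / (u-x)^m)"
    proof (intro continuous_intros)
      show "continuous_on (path_image (circlepath a R)) (\<lambda>u. g (u, w))"
        by (rule continuous_on_compose2[OF gc]) (use w R in \<open>auto intro!: continuous_intros\<close>)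
    qed (use x R in \<open>auto simp: dist_commute\<close>)
    then have "contour_integral (circlepath a R) (\<lambda>u. g (u,w) / (u-x)^m / (w-y)^n) =
          contour_integral (circlepath a R) (\<lambda>u. g (u,w) / (u-x)^m) / (w-y)^n"
      by (intro contour_integral_div contour_integrable_continuous_circlepath)
    moreover have "(\<lambda>u. F u w) = (\<lambda>u. g (u,w) / (u-x)^m / (w-y)^n)"
      unfolding F_def by (simp add: divide_divide_eq_left mult.commute)
    ultimately show "contour_integral (circlepath a R) (\<lambda>u. F u w) =
         contour_integral (circlepath a R) (\<lambda>u. g (snd (w, u), fst (w, u)) / (u - x) ^ m) / (w - y) ^ n"
      by simp
  qed
  finally show ?thesis .
qed

end

lemma Phi_dy:
  assumes gc: "continuous_on (cball a R \<times> cball b R) g" and R: "0 < R"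
  assumes x: "x \<in> ball a R" and y: "y \<in> ball b R" and n: "n \<noteq> 0"
  shows "((\<lambda>y. Phi g a b R m n x y) has_field_derivative (of_nat n * Phi g a b R m (Suc n) x y)) (at y)"
proof -
  have gc': "continuous_on (cball b R \<times> cball a R) (\<lambda>q. g (snd q, fst q))"
    by (rule continuous_on_compose2[OF gc]) (auto intro!: continuous_intros)
  have d: "((\<lambda>y. Phi (\<lambda>q. g (snd q, fst q)) b a R n m y x) has_field_derivative
      (of_nat n * Phi (\<lambda>q. g (snd q, fst q)) b a R (Suc n) m y x)) (at y)"
    by (rule Phi_dx[OF gc' R y x n])
  show ?thesis
  proof (rule has_field_derivative_transform_within_open[OF _ open_ball y])
    show "((\<lambda>y. Phi (\<lambda>q. g (snd q, fst q)) b a R n m y x) has_field_derivative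
      (of_nat n * Phi g a b R m (Suc n) x y)) (at y)"
      using d Phi_swap[OF gc R x y, of m "Suc n"] by simp
  qed (use Phi_swap[OF gc R x] in auto)
qed

lemma Phi_has_derivative:
  assumes gc: "continuous_on (cball a R \<times> cball b R) g" and R: "0 < R"
  assumes x: "x \<in> ball a R" and y: "y \<in> ball b R" and m: "m \<noteq> 0" and n: "n \<noteq> 0"
  shows "((\<lambda>q. Phi g a b R m n (fst q) (snd q)) has_derivative
     (\<lambda>v. of_nat m * Phi g a b R (Suc m) n x y * fst v + of_nat n * Phi g a b R m (Suc n) x y * snd v)) (at (x,y))"
proof -
  have fx: "((\<lambda>x. Phi g a b R m n x y) has_derivative (*) (of_nat m * Phi g a b R (Suc m) n x y)) (at x within ball a R)"
    by (rule has_field_derivative_imp_has_derivative[OF has_field_derivative_at_within[OF Phi_dx[OF gc R x y m]]])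
  have fy: "((\<lambda>y. Phi g a b R m n x y) has_derivative blinfun_apply (blinfun_mult_right (of_nat n * Phi g a b R m (Suc n) x y))) (at y within ball b R)"
    if "x \<in> ball a R" "y \<in> ball b R" for x y
    using has_field_derivative_imp_has_derivative[OF has_field_derivative_at_within[OF Phi_dy[OF gc R that n]]]
    by simp
  have c: "continuous (at (x,y) within ball a R \<times> ball b R) (\<lambda>q. Phi g a b R m (Suc n) (fst q) (snd q))"
    using Phi_cont[OF gc R] x y by (simp add: continuous_on_eq_continuous_within)
  have fyc: "continuous (at (x,y) within ball a R \<times> ball b R) (\<lambda>(x,y). blinfun_mult_right (of_nat n * Phi g a b R m (Suc n) x y))"
    using c unfolding continuous_within case_prod_beta
    by (intro bounded_linear.tendsto[OF bounded_linear_blinfun_mult_right] tendsto_mult tendsto_const)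
  have W: "((\<lambda>(x,y). Phi g a b R m n x y) has_derivative
     (\<lambda>(tx,ty). of_nat m * Phi g a b R (Suc m) n x y * tx + blinfun_apply (blinfun_mult_right (of_nat n * Phi g a b R m (Suc n) x y)) ty)) (at (x,y) within ball a R \<times> ball b R)"
    by (rule has_derivative_partialsI[OF fx fy fyc y convex_ball])
  have eq: "at (x,y) within ball a R \<times> ball b R = at (x,y)"
    by (rule at_within_open) (use x y in \<open>auto intro: open_Times\<close>)
  have "((\<lambda>(x,y). Phi g a b R m n x y) has_derivative
     (\<lambda>(tx,ty). of_nat m * Phi g a b R (Suc m) n x y * tx + of_nat n * Phi g a b R m (Suc n) x y * ty)) (at (x,y))"
    using W unfolding eq by simp
  then show ?thesis unfolding case_prod_beta by simp
qed

lemma holo2_partial: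
  assumes h: "holo2 U g" and p: "p \<in> U"
  shows "((\<lambda>t. g (t, snd p)) has_field_derivative pd 0 g p) (at (fst p))"
    and "((\<lambda>t. g (fst p, t)) has_field_derivative pd 1 g p) (at (snd p))"
proof -
  obtain L where L: "(g has_derivative L) (at p)" and lin: "\<And>c v. L (c * fst v, c * snd v) = c * L v"
    using h p unfolding holo2_def by blast
  have L': "(g has_derivative L) (at (fst p, snd p))" using L by simp
  have d1: "((\<lambda>t. (t, snd p)) has_derivative (\<lambda>h. (h, 0))) (at (fst p))"
    by (rule has_derivative_Pair[OF has_derivative_ident has_derivative_const])
  have c1: "((\<lambda>t. g (t, snd p)) has_derivative (\<lambda>h. L (h, 0))) (at (fst p))"
    using has_derivative_compose[OF d1 L'] .
  have e1: "(\<lambda>h. L (h, 0)) = (\<lambda>h. L (1,0) * h)"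
  proof
    fix h :: complex show "L (h, 0) = L (1,0) * h" using lin[of h "(1,0)"] by (simp add: mult.commute)
  qed
  have D1: "((\<lambda>t. g (t, snd p)) has_field_derivative L (1,0)) (at (fst p))"
    unfolding has_field_derivative_def using c1 e1 by simp
  then show "((\<lambda>t. g (t, snd p)) has_field_derivative pd 0 g p) (at (fst p))"
    unfolding pd_def using DERIV_imp_deriv[OF D1] by simp
  have d2: "((\<lambda>t. (fst p, t)) has_derivative (\<lambda>h. (0, h))) (at (snd p))"
    by (rule has_derivative_Pair[OF has_derivative_const has_derivative_ident])
  have c2: "((\<lambda>t. g (fst p, t)) has_derivative (\<lambda>h. L (0, h))) (at (snd p))"
    using has_derivative_compose[OF d2 L'] .
  have e2: "(\<lambda>h. L (0, h)) = (\<lambda>h. L (0,1) * h)"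
  proof
    fix h :: complex show "L (0, h) = L (0,1) * h" using lin[of h "(0,1)"] by (simp add: mult.commute)
  qed
  have D2: "((\<lambda>t. g (fst p, t)) has_field_derivative L (0,1)) (at (snd p))"
    unfolding has_field_derivative_def using c2 e2 by simp
  then show "((\<lambda>t. g (fst p, t)) has_field_derivative pd 1 g p) (at (snd p))"
    unfolding pd_def using DERIV_imp_deriv[OF D2] by simp
qed

lemma holo2_cont: "holo2 U g \<Longrightarrow> continuous_on U g"
proof (rule continuous_at_imp_continuous_on, rule ballI)
  fix x assume "holo2 U g" "x \<in> U"
  then obtain L where "(g has_derivative L) (at x)" unfolding holo2_def by blast
  then show "isCont g x" by (rule has_derivative_continuous)
qed

lemma Phi_repr:
  assumes h: "holo2 U g" and sub: "cball a R \<times> cball b R \<subseteq> U" and R: "0 < R"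
    and x: "x \<in> ball a R" and y: "y \<in> ball b R"
  shows "g (x,y) = Phi g a b R 1 1 x y / (2 * of_real pi * \<i>)^2"
proof -
  have gc: "continuous_on (cball a R \<times> cball b R) g"
    using continuous_on_subset[OF holo2_cont[OF h] sub] .
  have ps: "psi g b R 1 u y = 2 * of_real pi * \<i> * g (u,y)" if u: "u \<in> cball a R" for u
  proof -
    have "continuous_on (cball b R) (\<lambda>w. g (u,w))"
      by (rule continuous_on_compose2[OF gc]) (use u in \<open>auto intro!: continuous_intros\<close>)
    moreover have "(\<lambda>w. g (u,w)) holomorphic_on ball b R"
      unfolding holomorphic_on_def field_differentiable_def
    proof
      fix z assume z: "z \<in> ball b R"
      then have "(u,z) \<in> U" using sub u by auto
      from holo2_partial(2)[OF h this] show "\<exists>f'. ((\<lambda>w. g (u, w)) has_field_derivative f') (at z within ball b R)"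
        by (auto intro: has_field_derivative_at_within)
    qed
    moreover have "norm (y - b) < R" using y by (simp add: dist_norm norm_minus_commute)
    ultimately have "((\<lambda>w. g (u,w) / (w-y)) has_contour_integral (2 * of_real pi * \<i> * g (u,y))) (circlepath b R)"
      by (rule Cauchy_integral_circlepath)
    then show ?thesis unfolding psi_def by (simp add: contour_integral_unique)
  qed
  have "continuous_on (cball a R) (\<lambda>u. g (u,y))"
    by (rule continuous_on_compose2[OF gc]) (use y in \<open>auto intro!: continuous_intros\<close>)
  moreover have "(\<lambda>u. g (u,y)) holomorphic_on ball a R"
    unfolding holomorphic_on_def field_differentiable_def
  proof
    fix z assume z: "z \<in> ball a R"
    then have "(z,y) \<in> U" using sub y by auto
    from holo2_partial(1)[OF h this] show "\<exists>f'. ((\<lambda>u. g (u, y)) has_field_derivative f') (at z within ball a R)"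
      by (auto intro: has_field_derivative_at_within)
  qed
  moreover have "norm (x - a) < R" using x by (simp add: dist_norm norm_minus_commute)
  ultimately have "((\<lambda>u. g (u,y) / (u-x)) has_contour_integral (2 * of_real pi * \<i> * g (x,y))) (circlepath a R)"
    by (rule Cauchy_integral_circlepath)
  then have hc: "((\<lambda>u. 2 * of_real pi * \<i> * (g (u,y) / (u-x))) has_contour_integral (2 * of_real pi * \<i> * (2 * of_real pi * \<i> * g (x,y)))) (circlepath a R)"
    by (rule has_contour_integral_lmul)
  have "((\<lambda>u. psi g b R 1 u y / (u-x)^1) has_contour_integral (2 * of_real pi * \<i> * (2 * of_real pi * \<i> * g (x,y)))) (circlepath a R)"
  proof (rule has_contour_integral_eq[OF hc])
    fix u assume "u \<in> path_image (circlepath a R)"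
    then have "u \<in> cball a R" using R by simp
    then show "2 * of_real pi * \<i> * (g (u,y) / (u-x)) = psi g b R 1 u y / (u-x)^1"
      using ps by simp
  qed
  then have "Phi g a b R 1 1 x y = 2 * of_real pi * \<i> * (2 * of_real pi * \<i> * g (x,y))"
    unfolding Phi_def by (rule contour_integral_unique)
  then show ?thesis by (simp add: power2_eq_square)
qed

lemma local_polydisc:
  assumes "open U" "p \<in> U"
  obtains R where "0 < R" "cball (fst p) R \<times> cball (snd p) R \<subseteq> U"
proof -
  obtain e where e: "0 < e" "ball p e \<subseteq> U" using assms open_contains_ball by blast
  have "cball (fst p) (e/3) \<times> cball (snd p) (e/3) \<subseteq> U"
  proof
    fix q assume q: "q \<in> cball (fst p) (e/3) \<times> cball (snd p) (e/3)"
    have "dist p q \<le> dist (fst p) (fst q) + dist (snd p) (snd q)"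
      using sqrt_sum_squares_le_sum_abs[of "dist (fst p) (fst q)" "dist (snd p) (snd q)"]
      by (metis dist_Pair_Pair prod.collapse abs_of_nonneg zero_le_dist)
    also have "\<dots> < e" using q e by auto
    finally show "q \<in> U" using e by auto
  qed
  moreover have "0 < e/3" using e by simp
  ultimately show ?thesis using that by blast
qed

lemma local_pd:
  assumes h: "holo2 U g" and sub: "cball a R \<times> cball b R \<subseteq> U" and R: "0 < R"
    and q: "q \<in> ball a R \<times> ball b R"
  shows "pd 0 g q = Phi g a b R 2 1 (fst q) (snd q) / (2 * of_real pi * \<i>)^2"
    and "pd 1 g q = Phi g a b R 1 2 (fst q) (snd q) / (2 * of_real pi * \<i>)^2"
proof -
  define K :: complex where "K = (2 * of_real pi * \<i>)^2"
  have gc: "continuous_on (cball a R \<times> cball b R) g"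
    using continuous_on_subset[OF holo2_cont[OF h] sub] .
  have x: "fst q \<in> ball a R" and y: "snd q \<in> ball b R" using q by auto
  have qU: "q \<in> U" using q sub by auto
  have "((\<lambda>t. Phi g a b R 1 1 t (snd q) / K) has_field_derivative (of_nat 1 * Phi g a b R (Suc 1) 1 (fst q) (snd q)) / K) (at (fst q))"
    by (rule DERIV_cdivide[OF Phi_dx[OF gc R x y]]) simp
  then have D: "((\<lambda>t. Phi g a b R 1 1 t (snd q) / K) has_field_derivative Phi g a b R 2 1 (fst q) (snd q) / K) (at (fst q))"
    by (simp add: numeral_2_eq_2)
  have "((\<lambda>t. g (t, snd q)) has_field_derivative Phi g a b R 2 1 (fst q) (snd q) / K) (at (fst q))"
  proof (rule has_field_derivative_transform_within_open[OF D open_ball x])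
    fix t assume "t \<in> ball a R"
    then show "Phi g a b R 1 1 t (snd q) / K = g (t, snd q)"
      using Phi_repr[OF h sub R _ y] K_def by simp
  qed
  then show "pd 0 g q = Phi g a b R 2 1 (fst q) (snd q) / (2 * of_real pi * \<i>)^2"
    using holo2_partial(1)[OF h qU] DERIV_unique K_def by blast
  have "((\<lambda>t. Phi g a b R 1 1 (fst q) t / K) has_field_derivative (of_nat 1 * Phi g a b R 1 (Suc 1) (fst q) (snd q)) / K) (at (snd q))"
    by (rule DERIV_cdivide[OF Phi_dy[OF gc R x y]]) simp
  then have D: "((\<lambda>t. Phi g a b R 1 1 (fst q) t / K) has_field_derivative Phi g a b R 1 2 (fst q) (snd q) / K) (at (snd q))"
    by (simp add: numeral_2_eq_2)
  have "((\<lambda>t. g (fst q, t)) has_field_derivative Phi g a b R 1 2 (fst q) (snd q) / K) (at (snd q))"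
  proof (rule has_field_derivative_transform_within_open[OF D open_ball y])
    fix t assume "t \<in> ball b R"
    then show "Phi g a b R 1 1 (fst q) t / K = g (fst q, t)"
      using Phi_repr[OF h sub R x] K_def by simp
  qed
  then show "pd 1 g q = Phi g a b R 1 2 (fst q) (snd q) / (2 * of_real pi * \<i>)^2"
    using holo2_partial(2)[OF h qU] DERIV_unique K_def by blast
qed

lemma holo2_pd:
  assumes U: "open U" and h: "holo2 U g"
  shows "holo2 U (pd 0 g)" and "holo2 U (pd 1 g)"
proof -
  define K :: complex where "K = (2 * of_real pi * \<i>)^2"
  have main: "\<exists>L. (pd i g has_derivative L) (at p) \<and> (\<forall>c v. L (c * fst v, c * snd v) = c * L v)"
    if p: "p \<in> U" and i: "i = 0 \<or> i = 1" for p i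
  proof -
    obtain R where R: "0 < R" and sub: "cball (fst p) R \<times> cball (snd p) R \<subseteq> U"
      using local_polydisc[OF U p] by blast
    define a b where "a = fst p" and "b = snd p"
    have gc: "continuous_on (cball a R \<times> cball b R) g"
      using continuous_on_subset[OF holo2_cont[OF h] sub] a_def b_def by simp
    have x: "a \<in> ball a R" and y: "b \<in> ball b R" using R by auto
    have pab: "p = (a,b)" using a_def b_def by simp
    define m n where "m = (if i = 0 then 2 else 1::nat)" and "n = (if i = 0 then 1 else 2::nat)"
    have eqN: "pd i g q = (1/K) * Phi g a b R m n (fst q) (snd q)" if "q \<in> ball a R \<times> ball b R" for q
      using local_pd[OF h sub[folded a_def b_def] R that] i unfolding m_def n_def K_def by auto
    have D: "((\<lambda>q. Phi g a b R m n (fst q) (snd q)) has_derivative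
       (\<lambda>v. of_nat m * Phi g a b R (Suc m) n a b * fst v + of_nat n * Phi g a b R m (Suc n) a b * snd v)) (at (a,b))"
      by (rule Phi_has_derivative[OF gc R x y]) (auto simp: m_def n_def)
    have D2: "((\<lambda>q. (1/K) * Phi g a b R m n (fst q) (snd q)) has_derivative
       (\<lambda>v. (1/K) * (of_nat m * Phi g a b R (Suc m) n a b * fst v + of_nat n * Phi g a b R m (Suc n) a b * snd v))) (at (a,b))"
      by (rule has_derivative_mult_right[OF D])
    have D3: "(pd i g has_derivative
       (\<lambda>v. (1/K) * (of_nat m * Phi g a b R (Suc m) n a b * fst v + of_nat n * Phi g a b R m (Suc n) a b * snd v))) (at p)"
      unfolding pab
    proof (rule has_derivative_transform_within_open[OF D2 open_Times[OF open_ball[of a R] open_ball[of b R]]])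
      show "(a, b) \<in> ball a R \<times> ball b R" using x y by simp
      fix q assume "q \<in> ball a R \<times> ball b R"
      then show "(1/K) * Phi g a b R m n (fst q) (snd q) = pd i g q" using eqN by simp
    qed
    show ?thesis
      by (rule exI, rule conjI[OF D3]) (simp add: algebra_simps)
  qed
  show "holo2 U (pd 0 g)" unfolding holo2_def using main by blast
  show "holo2 U (pd 1 g)" unfolding holo2_def using main by blast
qed

lemma pd_comm:
  assumes U: "open U" and h: "holo2 U g" and p: "p \<in> U"
  shows "pd 0 (pd 1 g) p = pd 1 (pd 0 g) p"
proof -
  define K :: complex where "K = (2 * of_real pi * \<i>)^2"
  obtain R where R: "0 < R" and sub: "cball (fst p) R \<times> cball (snd p) R \<subseteq> U"
    using local_polydisc[OF U p] by blast
  define a b where "a = fst p" and "b = snd p"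
  have sub': "cball a R \<times> cball b R \<subseteq> U" using sub a_def b_def by simp
  have gc: "continuous_on (cball a R \<times> cball b R) g"
    using continuous_on_subset[OF holo2_cont[OF h] sub'] .
  have x: "a \<in> ball a R" and y: "b \<in> ball b R" using R by auto
  have pab: "p = (a,b)" using a_def b_def by simp
  have "((\<lambda>t. Phi g a b R 1 2 t b / K) has_field_derivative (of_nat 1 * Phi g a b R (Suc 1) 2 a b) / K) (at a)"
    by (rule DERIV_cdivide[OF Phi_dx[OF gc R x y]]) simp
  then have D: "((\<lambda>t. Phi g a b R 1 2 t b / K) has_field_derivative Phi g a b R 2 2 a b / K) (at a)"
    by (simp add: numeral_2_eq_2)
  have "((\<lambda>t. pd 1 g (t, b)) has_field_derivative Phi g a b R 2 2 a b / K) (at a)"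
  proof (rule has_field_derivative_transform_within_open[OF D open_ball x])
    fix t assume "t \<in> ball a R"
    then show "Phi g a b R 1 2 t b / K = pd 1 g (t, b)"
      using local_pd(2)[OF h sub' R, of "(t,b)"] y K_def by simp
  qed
  then have 1: "pd 0 (pd 1 g) p = Phi g a b R 2 2 a b / K"
    unfolding pd_def pab by (simp add: DERIV_imp_deriv)
  have "((\<lambda>t. Phi g a b R 2 1 a t / K) has_field_derivative (of_nat 1 * Phi g a b R 2 (Suc 1) a b) / K) (at b)"
    by (rule DERIV_cdivide[OF Phi_dy[OF gc R x y]]) simp
  then have D: "((\<lambda>t. Phi g a b R 2 1 a t / K) has_field_derivative Phi g a b R 2 2 a b / K) (at b)"
    by (simp add: numeral_2_eq_2)
  have "((\<lambda>t. pd 0 g (a, t)) has_field_derivative Phi g a b R 2 2 a b / K) (at b)"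
  proof (rule has_field_derivative_transform_within_open[OF D open_ball y])
    fix t assume "t \<in> ball b R"
    then show "Phi g a b R 2 1 a t / K = pd 0 g (a, t)"
      using local_pd(1)[OF h sub' R, of "(a,t)"] x K_def by simp
  qed
  then have 2: "pd 1 (pd 0 g) p = Phi g a b R 2 2 a b / K"
    unfolding pd_def pab by (simp add: DERIV_imp_deriv)
  show ?thesis using 1 2 by simp
qed

definition upd :: "nat \<Rightarrow> pt \<Rightarrow> complex \<Rightarrow> pt" where
  "upd i p t = (if i = 0 then (t, snd p) else (fst p, t))"

lemma pd_upd: "pd i g p = deriv (\<lambda>t. g (upd i p t)) (comp i p)"
  by (simp add: pd_def upd_def comp_def)

lemma holo2_pd_has:
  assumes "holo2 U g" "p \<in> U"
  shows "((\<lambda>t. g (upd i p t)) has_field_derivative pd i g p) (at (comp i p))"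
  using holo2_partial[OF assms] by (cases "i = 0") (auto simp: upd_def comp_def pd_def)

lemma upd_cont: "continuous_on UNIV (upd i p)"
  unfolding upd_def by (cases "i = 0") (auto intro!: continuous_intros)

lemma upd_same: "upd i p (comp i p) = p"
  by (simp add: upd_def comp_def)

lemma pd_local:
  assumes U: "open U" and p: "p \<in> U" and eq: "\<And>q. q \<in> U \<Longrightarrow> f q = g q"
  shows "pd i f p = pd i g p"
  unfolding pd_upd
proof (rule deriv_cong_ev[OF _ refl])
  have "open (upd i p -` U)" by (rule open_vimage[OF U upd_cont])
  moreover have "comp i p \<in> upd i p -` U" using p upd_same by simp
  ultimately show "\<forall>\<^sub>F t in nhds (comp i p). f (upd i p t) = g (upd i p t)"
    unfolding eventually_nhds using eq by blast
qed

lemma pd_const [simp]: "pd i (\<lambda>q. c) p = 0"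
  by (simp add: pd_upd)

lemma pd_add:
  assumes "holo2 U f" "holo2 U g" "p \<in> U"
  shows "pd i (\<lambda>q. f q + g q) p = pd i f p + pd i g p"
  unfolding pd_upd[of i "\<lambda>q. f q + g q"]
  by (rule DERIV_imp_deriv, rule DERIV_add) (use holo2_pd_has assms in auto)

lemma pd_diff:
  assumes "holo2 U f" "holo2 U g" "p \<in> U"
  shows "pd i (\<lambda>q. f q - g q) p = pd i f p - pd i g p"
  unfolding pd_upd[of i "\<lambda>q. f q - g q"]
  by (rule DERIV_imp_deriv, rule DERIV_diff) (use holo2_pd_has assms in auto)

lemma pd_mult:
  assumes "holo2 U f" "holo2 U g" "p \<in> U"
  shows "pd i (\<lambda>q. f q * g q) p = pd i f p * g p + f p * pd i g p"
proof -
  have "((\<lambda>t. f (upd i p t) * g (upd i p t)) has_field_derivative pd i f p * g p + f p * pd i g p) (at (comp i p))"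
    using DERIV_mult'[OF holo2_pd_has[OF assms(1,3)] holo2_pd_has[OF assms(2,3)]]
    by (simp add: upd_same algebra_simps)
  then show ?thesis unfolding pd_upd[of i "\<lambda>q. f q * g q"]
    by (rule DERIV_imp_deriv)
qed

lemma pd_divide:
  assumes "holo2 U f" "holo2 U g" "p \<in> U" "g p \<noteq> 0"
  shows "pd i (\<lambda>q. f q / g q) p = (pd i f p * g p - f p * pd i g p) / (g p)^2"
proof -
  have "((\<lambda>t. f (upd i p t) / g (upd i p t)) has_field_derivative (pd i f p * g p - f p * pd i g p) / (g p)^2) (at (comp i p))"
    using DERIV_divide[OF holo2_pd_has[OF assms(1,3)] holo2_pd_has[OF assms(2,3)]] assms(4)
    by (simp add: upd_same power2_eq_square)
  then show ?thesis unfolding pd_upd[of i "\<lambda>q. f q / g q"]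
    by (rule DERIV_imp_deriv)
qed

lemma holo2_const [simp]: "holo2 U (\<lambda>q. c)"
  unfolding holo2_def by (auto intro!: exI[of _ "\<lambda>v. 0"])

lemma holo2_add:
  assumes "holo2 U f" "holo2 U g" shows "holo2 U (\<lambda>q. f q + g q)"
  unfolding holo2_def
proof
  fix p assume p: "p \<in> U"
  obtain Lf where Lf: "(f has_derivative Lf) (at p)" "\<And>c v. Lf (c * fst v, c * snd v) = c * Lf v"
    using assms(1) p unfolding holo2_def by blast
  obtain Lg where Lg: "(g has_derivative Lg) (at p)" "\<And>c v. Lg (c * fst v, c * snd v) = c * Lg v"
    using assms(2) p unfolding holo2_def by blast
  show "\<exists>L. ((\<lambda>q. f q + g q) has_derivative L) (at p) \<and> (\<forall>c v. L (c * fst v, c * snd v) = c * L v)"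
    by (rule exI[of _ "\<lambda>v. Lf v + Lg v"]) (auto intro!: has_derivative_add Lf Lg simp: Lf(2) Lg(2) algebra_simps)
qed

lemma holo2_diff:
  assumes "holo2 U f" "holo2 U g" shows "holo2 U (\<lambda>q. f q - g q)"
  unfolding holo2_def
proof
  fix p assume p: "p \<in> U"
  obtain Lf where Lf: "(f has_derivative Lf) (at p)" "\<And>c v. Lf (c * fst v, c * snd v) = c * Lf v"
    using assms(1) p unfolding holo2_def by blast
  obtain Lg where Lg: "(g has_derivative Lg) (at p)" "\<And>c v. Lg (c * fst v, c * snd v) = c * Lg v"
    using assms(2) p unfolding holo2_def by blast
  show "\<exists>L. ((\<lambda>q. f q - g q) has_derivative L) (at p) \<and> (\<forall>c v. L (c * fst v, c * snd v) = c * L v)"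
    by (rule exI[of _ "\<lambda>v. Lf v - Lg v"]) (auto intro!: has_derivative_diff Lf Lg simp: Lf(2) Lg(2) algebra_simps)
qed

lemma holo2_mult:
  assumes "holo2 U f" "holo2 U g" shows "holo2 U (\<lambda>q. f q * g q)"
  unfolding holo2_def
proof
  fix p assume p: "p \<in> U"
  obtain Lf where Lf: "(f has_derivative Lf) (at p)" "\<And>c v. Lf (c * fst v, c * snd v) = c * Lf v"
    using assms(1) p unfolding holo2_def by blast
  obtain Lg where Lg: "(g has_derivative Lg) (at p)" "\<And>c v. Lg (c * fst v, c * snd v) = c * Lg v"
    using assms(2) p unfolding holo2_def by blast
  show "\<exists>L. ((\<lambda>q. f q * g q) has_derivative L) (at p) \<and> (\<forall>c v. L (c * fst v, c * snd v) = c * L v)"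
    by (rule exI[of _ "\<lambda>v. f p * Lg v + Lf v * g p"], rule conjI[OF has_derivative_mult[OF Lf(1) Lg(1)]])
       (simp add: Lf(2) Lg(2) algebra_simps)
qed

lemma holo2_divide:
  assumes "holo2 U f" "holo2 U g" "\<forall>q\<in>U. g q \<noteq> 0" shows "holo2 U (\<lambda>q. f q / g q)"
  unfolding holo2_def
proof
  fix p assume p: "p \<in> U"
  obtain Lf where Lf: "(f has_derivative Lf) (at p)" "\<And>c v. Lf (c * fst v, c * snd v) = c * Lf v"
    using assms(1) p unfolding holo2_def by blast
  obtain Lg where Lg: "(g has_derivative Lg) (at p)" "\<And>c v. Lg (c * fst v, c * snd v) = c * Lg v"
    using assms(2) p unfolding holo2_def by blast
  have gp: "g p \<noteq> 0" using assms(3) p by auto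
  show "\<exists>L. ((\<lambda>q. f q / g q) has_derivative L) (at p) \<and> (\<forall>c v. L (c * fst v, c * snd v) = c * L v)"
    by (rule exI[of _ "\<lambda>h. - f p * (inverse (g p) * Lg h * inverse (g p)) + Lf h / g p"])
       (rule conjI[OF has_derivative_divide[OF Lf(1) Lg(1) gp]], simp add: Lf(2) Lg(2) algebra_simps)
qed

definition Ah :: "(pt \<Rightarrow> complex) \<Rightarrow> pt \<Rightarrow> complex" where "Ah f = (\<lambda>q. pd 0 f q / f q)"
definition Bh :: "(pt \<Rightarrow> complex) \<Rightarrow> pt \<Rightarrow> complex" where "Bh f = (\<lambda>q. pd 1 f q / f q)"
definition Gh :: "(pt \<Rightarrow> complex) \<Rightarrow> chr" where
  "Gh f k i j = (if k = 0 \<and> i = 0 \<and> j = 0 then Ah f else if k = 1 \<and> i = 1 \<and> j = 1 then Bh f else (\<lambda>q. 0))"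

lemma vd_eq: "vd X h p = fst (X p) * pd 0 h p + snd (X p) * pd 1 h p"
  by (simp add: vd_def comp_def numeral_2_eq_2)

lemma nabla_eq: "nabla G X Y p =
  (vd X (\<lambda>q. fst (Y q)) p + (G 0 0 0 p * fst (X p) * fst (Y p) + G 0 0 1 p * fst (X p) * snd (Y p)
     + G 0 1 0 p * snd (X p) * fst (Y p) + G 0 1 1 p * snd (X p) * snd (Y p)),
   vd X (\<lambda>q. snd (Y q)) p + (G 1 0 0 p * fst (X p) * fst (Y p) + G 1 0 1 p * fst (X p) * snd (Y p)
     + G 1 1 0 p * snd (X p) * fst (Y p) + G 1 1 1 p * snd (X p) * snd (Y p)))"
  by (simp add: nabla_def comp_def numeral_2_eq_2 Let_def algebra_simps)

lemma nabla_Gh: "nabla (Gh f) X Y = (\<lambda>p.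
  (fst (X p) * pd 0 (\<lambda>q. fst (Y q)) p + snd (X p) * pd 1 (\<lambda>q. fst (Y q)) p + Ah f p * fst (X p) * fst (Y p),
   fst (X p) * pd 0 (\<lambda>q. snd (Y q)) p + snd (X p) * pd 1 (\<lambda>q. snd (Y q)) p + Bh f p * snd (X p) * snd (Y p)))"
  by (rule ext) (simp add: nabla_eq vd_eq Gh_def)

lemma hvf_const [simp]: "hvf U (\<lambda>q. c)"
  by (simp add: hvf_def)

lemma holo2_AB:
  assumes U: "open U" and h: "holo2 U f" and nz: "\<forall>p\<in>U. f p \<noteq> 0"
  shows "holo2 U (Ah f)" "holo2 U (Bh f)"
  unfolding Ah_def Bh_def
  by (rule holo2_divide[OF holo2_pd(1)[OF U h] h nz], rule holo2_divide[OF holo2_pd(2)[OF U h] h nz])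

lemma Gh_is_hess:
  assumes U: "open U" and h: "holo2 U f" and nz: "\<forall>p\<in>U. f p \<noteq> 0"
  shows "is_hess U f (Gh f)"
  unfolding is_hess_def
proof (intro conjI allI impI ballI)
  fix k i j :: nat assume "k < 2" "i < 2" "j < 2"
  then show "holo2 U (Gh f k i j)"
    using holo2_AB[OF assms] by (auto simp: Gh_def)
next
  fix X Y p
  show "nabla (Gh f) X Y p - nabla (Gh f) Y X p = bracket X Y p"
    by (simp add: nabla_Gh bracket_def vd_eq algebra_simps)
next
  fix X Y Z p assume X: "hvf U X" and Y: "hvf U Y" and Z: "hvf U Z" and p: "p \<in> U"
  note hv = X[unfolded hvf_def] Y[unfolded hvf_def] Z[unfolded hvf_def]
  have fp: "f p \<noteq> 0" using nz p by auto
  have "vd X (\<lambda>q. omega f q (Y q) (Z q)) p =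
     fst (X p) * (pd 0 f p * (fst (Y p) * snd (Z p) - snd (Y p) * fst (Z p)) + f p * (
        pd 0 (\<lambda>q. fst (Y q)) p * snd (Z p) + fst (Y p) * pd 0 (\<lambda>q. snd (Z q)) p
        - (pd 0 (\<lambda>q. snd (Y q)) p * fst (Z p) + snd (Y p) * pd 0 (\<lambda>q. fst (Z q)) p)))
   + snd (X p) * (pd 1 f p * (fst (Y p) * snd (Z p) - snd (Y p) * fst (Z p)) + f p * (
        pd 1 (\<lambda>q. fst (Y q)) p * snd (Z p) + fst (Y p) * pd 1 (\<lambda>q. snd (Z q)) p
        - (pd 1 (\<lambda>q. snd (Y q)) p * fst (Z p) + snd (Y p) * pd 1 (\<lambda>q. fst (Z q)) p)))"
    unfolding vd_eq omega_def
    by (simp add: pd_mult[OF h _ p] pd_diff[OF _ _ p] pd_mult[OF _ _ p] holo2_mult holo2_diff hv)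
  also have "\<dots> = omega f p (nabla (Gh f) X Y p) (Z p) + omega f p (Y p) (nabla (Gh f) X Z p)"
    using fp by (simp add: nabla_Gh omega_def Ah_def Bh_def field_simps)
  finally show "vd X (\<lambda>q. omega f q (Y q) (Z q)) p = omega f p (nabla (Gh f) X Y p) (Z p) + omega f p (Y p) (nabla (Gh f) X Z p)" .
next
  fix X Y :: "pt \<Rightarrow> pt" and p assume Y0: "\<forall>p\<in>U. fst (Y p) = 0" and p: "p \<in> U"
  have "pd i (\<lambda>q. fst (Y q)) p = 0" for i
    using pd_local[OF U p, of "\<lambda>q. fst (Y q)" "\<lambda>q. 0"] Y0 by simp
  then show "fst (nabla (Gh f) X Y p) = 0" using Y0 p by (simp add: nabla_Gh)
next
  fix X Y :: "pt \<Rightarrow> pt" and p assume Y0: "\<forall>p\<in>U. snd (Y p) = 0" and p: "p \<in> U"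
  have "pd i (\<lambda>q. snd (Y q)) p = 0" for i
    using pd_local[OF U p, of "\<lambda>q. snd (Y q)" "\<lambda>q. 0"] Y0 by simp
  then show "snd (nabla (Gh f) X Y p) = 0" using Y0 p by (simp add: nabla_Gh)
qed

lemma hess_unique:
  assumes H: "is_hess U f G" and p: "p \<in> U" and fp: "f p \<noteq> 0"
    and k: "k < 2" and i: "i < 2" and j: "j < 2"
  shows "G k i j p = Gh f k i j p"
proof -
  define e0 :: "pt \<Rightarrow> pt" where "e0 = (\<lambda>q. (1, 0))"
  define e1 :: "pt \<Rightarrow> pt" where "e1 = (\<lambda>q. (0, 1))"
  have h0: "hvf U e0" and h1: "hvf U e1" by (simp_all add: e0_def e1_def)
  note HH = H[unfolded is_hess_def]
  have T: "nabla G e0 e1 p - nabla G e1 e0 p = bracket e0 e1 p"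
    using HH h0 h1 p by blast
  have F1a: "fst (nabla G e0 e1 p) = 0" using HH h0 h1 p by (simp add: e1_def)
  have F1b: "fst (nabla G e1 e1 p) = 0" using HH h0 h1 p by (simp add: e1_def)
  have F2a: "snd (nabla G e0 e0 p) = 0" using HH h0 h1 p by (simp add: e0_def)
  have F2b: "snd (nabla G e1 e0 p) = 0" using HH h0 h1 p by (simp add: e0_def)
  have O1: "vd e0 (\<lambda>q. omega f q (e0 q) (e1 q)) p = omega f p (nabla G e0 e0 p) (e1 p) + omega f p (e0 p) (nabla G e0 e1 p)"
    using HH h0 h1 p by blast
  have O2: "vd e1 (\<lambda>q. omega f q (e0 q) (e1 q)) p = omega f p (nabla G e1 e0 p) (e1 p) + omega f p (e0 p) (nabla G e1 e1 p)"
    using HH h0 h1 p by blast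
  have g001: "G 0 0 1 p = 0" using F1a by (simp add: nabla_eq vd_eq e0_def e1_def)
  have g011: "G 0 1 1 p = 0" using F1b by (simp add: nabla_eq vd_eq e0_def e1_def)
  have g100: "G 1 0 0 p = 0" using F2a by (simp add: nabla_eq vd_eq e0_def e1_def)
  have g110: "G 1 1 0 p = 0" using F2b by (simp add: nabla_eq vd_eq e0_def e1_def)
  have g010: "G 0 1 0 p = 0" and g101: "G 1 0 1 p = 0"
    using T g001 g110 by (simp_all add: nabla_eq vd_eq bracket_def e0_def e1_def prod_eq_iff)
  have g000: "G 0 0 0 p = pd 0 f p / f p"
    using O1 g101 fp by (simp add: nabla_eq vd_eq omega_def e0_def e1_def field_simps)
  have g111: "G 1 1 1 p = pd 1 f p / f p"
    using O2 g010 fp by (simp add: nabla_eq vd_eq omega_def e0_def e1_def field_simps)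
  have "k = 0 \<or> k = 1" "i = 0 \<or> i = 1" "j = 0 \<or> j = 1" using k i j by auto
  then show ?thesis
    using g000 g001 g010 g011 g100 g101 g110 g111
    by (auto simp: Gh_def Ah_def Bh_def)
qed

lemma nabla_cong_G:
  assumes "\<forall>k<2. \<forall>i<2. \<forall>j<2. G k i j q = G' k i j q"
  shows "nabla G X Y q = nabla G' X Y q"
  using assms by (simp add: nabla_eq)

lemma nabla_local_W:
  assumes U: "open U" and p: "p \<in> U" and W: "\<forall>q\<in>U. W q = W' q"
  shows "nabla G X W p = nabla G X W' p"
proof -
  have "pd i (\<lambda>q. fst (W q)) p = pd i (\<lambda>q. fst (W' q)) p" for i
    by (rule pd_local[OF U p]) (use W in simp)
  moreover have "pd i (\<lambda>q. snd (W q)) p = pd i (\<lambda>q. snd (W' q)) p" for i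
    by (rule pd_local[OF U p]) (use W in simp)
  ultimately show ?thesis using W p by (simp add: nabla_eq vd_eq)
qed

lemma curv_cong:
  assumes U: "open U" and p: "p \<in> U" and GG: "\<forall>q\<in>U. \<forall>k<2. \<forall>i<2. \<forall>j<2. G k i j q = G' k i j q"
  shows "curv G X Y Z p = curv G' X Y Z p"
proof -
  have W1: "\<forall>q\<in>U. nabla G Y Z q = nabla G' Y Z q" using GG nabla_cong_G by blast
  have W2: "\<forall>q\<in>U. nabla G X Z q = nabla G' X Z q" using GG nabla_cong_G by blast
  have "nabla G X (nabla G Y Z) p = nabla G' X (nabla G' Y Z) p"
    using nabla_cong_G[of G p G'] GG p nabla_local_W[OF U p W1] by simp
  moreover have "nabla G Y (nabla G X Z) p = nabla G' Y (nabla G' X Z) p"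
    using nabla_cong_G[of G p G'] GG p nabla_local_W[OF U p W2] by simp
  moreover have "nabla G (bracket X Y) Z p = nabla G' (bracket X Y) Z p"
    using nabla_cong_G[of G p G'] GG p by simp
  ultimately show ?thesis by (simp add: curv_def)
qed

lemma pdB0:
  assumes U: "open U" and h: "holo2 U f" and p: "p \<in> U" and fp: "f p \<noteq> 0"
  shows "pd 0 (Bh f) p = (pd 0 (pd 1 f) p * f p - pd 1 f p * pd 0 f p) / (f p)^2"
  unfolding Bh_def by (rule pd_divide[OF holo2_pd(2)[OF U h] h p fp])

lemma pdA1:
  assumes U: "open U" and h: "holo2 U f" and p: "p \<in> U" and fp: "f p \<noteq> 0"
  shows "pd 1 (Ah f) p = (pd 0 (pd 1 f) p * f p - pd 0 f p * pd 1 f p) / (f p)^2"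
  unfolding Ah_def pd_divide[OF holo2_pd(1)[OF U h] h p fp] pd_comm[OF U h p] ..

lemma flat_imp_cond:
  assumes U: "open U" and h: "holo2 U f" and nz: "\<forall>p\<in>U. f p \<noteq> 0"
    and fl: "flat_conn U (Gh f)" and p: "p \<in> U"
  shows "pd 0 (pd 1 f) p * f p = pd 0 f p * pd 1 f p"
proof -
  define e0 :: "pt \<Rightarrow> pt" where "e0 = (\<lambda>q. (1, 0))"
  define e1 :: "pt \<Rightarrow> pt" where "e1 = (\<lambda>q. (0, 1))"
  have fp: "f p \<noteq> 0" using nz p by auto
  have "curv (Gh f) e0 e1 e1 p = 0" using fl p unfolding flat_conn_def by (simp add: e0_def e1_def)
  then have "snd (curv (Gh f) e0 e1 e1 p) = 0" by simp
  then have "pd 0 (Bh f) p = 0"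
    by (simp add: curv_def nabla_Gh bracket_def vd_eq e0_def e1_def)
  then show ?thesis using pdB0[OF U h p fp] fp by (simp add: mult.commute)
qed

lemma pd_ne0: "k \<noteq> 0 \<Longrightarrow> pd k g = pd 1 g"
  by (simp add: pd_def fun_eq_iff)

lemma holo2_pd_any: "open U \<Longrightarrow> holo2 U g \<Longrightarrow> holo2 U (pd k g)"
  using holo2_pd[of U g] pd_ne0[of k g] by (cases "k = 0") auto

lemma pd_nabla:
  assumes U: "open U" and h: "holo2 U f" and nz: "\<forall>p\<in>U. f p \<noteq> 0"
    and V: "hvf U V" and W: "hvf U W" and p: "p \<in> U"
  shows "pd i (\<lambda>q. fst (nabla (Gh f) V W q)) p =
      pd i (\<lambda>q. fst (V q)) p * pd 0 (\<lambda>q. fst (W q)) p + fst (V p) * pd i (pd 0 (\<lambda>q. fst (W q))) p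
    + pd i (\<lambda>q. snd (V q)) p * pd 1 (\<lambda>q. fst (W q)) p + snd (V p) * pd i (pd 1 (\<lambda>q. fst (W q))) p
    + ((pd i (Ah f) p * fst (V p) + Ah f p * pd i (\<lambda>q. fst (V q)) p) * fst (W p) + Ah f p * fst (V p) * pd i (\<lambda>q. fst (W q)) p)"
  (is ?A)
  and "pd i (\<lambda>q. snd (nabla (Gh f) V W q)) p =
      pd i (\<lambda>q. fst (V q)) p * pd 0 (\<lambda>q. snd (W q)) p + fst (V p) * pd i (pd 0 (\<lambda>q. snd (W q))) p
    + pd i (\<lambda>q. snd (V q)) p * pd 1 (\<lambda>q. snd (W q)) p + snd (V p) * pd i (pd 1 (\<lambda>q. snd (W q))) p
    + ((pd i (Bh f) p * snd (V p) + Bh f p * pd i (\<lambda>q. snd (V q)) p) * snd (W p) + Bh f p * snd (V p) * pd i (\<lambda>q. snd (W q)) p)"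
  (is ?B)
proof -
  note hv = V[unfolded hvf_def] W[unfolded hvf_def]
  have hW: "holo2 U (pd k (\<lambda>q. fst (W q)))" "holo2 U (pd k (\<lambda>q. snd (W q)))" for k
    using holo2_pd_any[OF U] hv by auto
  note hAB = holo2_AB[OF U h nz]
  show ?A
    unfolding nabla_Gh fst_conv
    by (simp only: pd_add[of U _ _ p] pd_mult[of U _ _ p] holo2_add holo2_mult hv hW hAB p) (simp only: add.assoc)
  show ?B
    unfolding nabla_Gh snd_conv
    by (simp only: pd_add[of U _ _ p] pd_mult[of U _ _ p] holo2_add holo2_mult hv hW hAB p) (simp only: add.assoc)
qed

lemma cond_imp_flat:
  assumes U: "open U" and h: "holo2 U f" and nz: "\<forall>p\<in>U. f p \<noteq> 0"
    and cond: "\<forall>p\<in>U. pd 0 (pd 1 f) p * f p = pd 0 f p * pd 1 f p"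
    and X: "hvf U X" and Y: "hvf U Y" and Z: "hvf U Z" and p: "p \<in> U"
  shows "curv (Gh f) X Y Z p = 0"
proof -
  have fp: "f p \<noteq> 0" using nz p by auto
  have A1: "pd 1 (Ah f) p = 0" using pdA1[OF U h p fp] cond p by simp
  have B0: "pd 0 (Bh f) p = 0" using pdB0[OF U h p fp] cond p by (simp add: mult.commute)
  note hv = X[unfolded hvf_def] Y[unfolded hvf_def] Z[unfolded hvf_def]
  have sZ: "pd 0 (pd 1 (\<lambda>q. fst (Z q))) p = pd 1 (pd 0 (\<lambda>q. fst (Z q))) p"
           "pd 0 (pd 1 (\<lambda>q. snd (Z q))) p = pd 1 (pd 0 (\<lambda>q. snd (Z q))) p"
    using pd_comm[OF U _ p] hv by auto
  have e: "curv (Gh f) X Y Z p =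
     (fst (X p) * pd 0 (\<lambda>q. fst (nabla (Gh f) Y Z q)) p + snd (X p) * pd 1 (\<lambda>q. fst (nabla (Gh f) Y Z q)) p
        + Ah f p * fst (X p) * fst (nabla (Gh f) Y Z p)
      - (fst (Y p) * pd 0 (\<lambda>q. fst (nabla (Gh f) X Z q)) p + snd (Y p) * pd 1 (\<lambda>q. fst (nabla (Gh f) X Z q)) p
        + Ah f p * fst (Y p) * fst (nabla (Gh f) X Z p))
      - (fst (bracket X Y p) * pd 0 (\<lambda>q. fst (Z q)) p + snd (bracket X Y p) * pd 1 (\<lambda>q. fst (Z q)) p
        + Ah f p * fst (bracket X Y p) * fst (Z p)),
      fst (X p) * pd 0 (\<lambda>q. snd (nabla (Gh f) Y Z q)) p + snd (X p) * pd 1 (\<lambda>q. snd (nabla (Gh f) Y Z q)) p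
        + Bh f p * snd (X p) * snd (nabla (Gh f) Y Z p)
      - (fst (Y p) * pd 0 (\<lambda>q. snd (nabla (Gh f) X Z q)) p + snd (Y p) * pd 1 (\<lambda>q. snd (nabla (Gh f) X Z q)) p
        + Bh f p * snd (Y p) * snd (nabla (Gh f) X Z p))
      - (fst (bracket X Y p) * pd 0 (\<lambda>q. snd (Z q)) p + snd (bracket X Y p) * pd 1 (\<lambda>q. snd (Z q)) p
        + Bh f p * snd (bracket X Y p) * snd (Z p)))"
    unfolding curv_def by (simp add: nabla_Gh[of f X] nabla_Gh[of f Y] nabla_Gh[of f "bracket X Y"] vd_eq)
  have A1': "pd (Suc 0) (Ah f) p = 0" using A1 by simp
  have sZ': "pd 0 (pd (Suc 0) (\<lambda>q. fst (Z q))) p = pd (Suc 0) (pd 0 (\<lambda>q. fst (Z q))) p"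
            "pd 0 (pd (Suc 0) (\<lambda>q. snd (Z q))) p = pd (Suc 0) (pd 0 (\<lambda>q. snd (Z q))) p"
    using sZ by simp_all
  show ?thesis
    unfolding e pd_nabla[OF U h nz Y Z p] pd_nabla[OF U h nz X Z p]
    by (simp add: nabla_Gh bracket_def vd_eq A1 B0 sZ A1' sZ' algebra_simps zero_prod_def)
qed

theorem corollary4p4:
  fixes U :: "pt set" and f :: "pt \<Rightarrow> complex"
  assumes "open U" and "holo2 U f" and "\<forall>p\<in>U. f p \<noteq> 0"
  shows "(\<exists>G. is_hess U f G) \<and>
         (\<forall>G. is_hess U f G \<longrightarrow>
            (flat_conn U G \<longleftrightarrow>
             (\<forall>p\<in>U. pd 0 (pd 1 f) p * f p = pd 0 f p * pd 1 f p)))"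
proof (intro conjI allI impI)
  show "\<exists>G. is_hess U f G" using Gh_is_hess[OF assms] by blast
next
  fix G assume H: "is_hess U f G"
  have GG: "\<forall>q\<in>U. \<forall>k<2. \<forall>i<2. \<forall>j<2. G k i j q = Gh f k i j q"
    using hess_unique[OF H] assms(3) by blast
  have "flat_conn U G \<longleftrightarrow> flat_conn U (Gh f)"
    unfolding flat_conn_def using curv_cong[OF assms(1) _ GG] by auto
  also have "\<dots> \<longleftrightarrow> (\<forall>p\<in>U. pd 0 (pd 1 f) p * f p = pd 0 f p * pd 1 f p)"
  proof
    assume "flat_conn U (Gh f)"
    then show "\<forall>p\<in>U. pd 0 (pd 1 f) p * f p = pd 0 f p * pd 1 f p"
      using flat_imp_cond[OF assms] by blast
  next
    assume "\<forall>p\<in>U. pd 0 (pd 1 f) p * f p = pd 0 f p * pd 1 f p"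
    then show "flat_conn U (Gh f)"
      unfolding flat_conn_def using cond_imp_flat[OF assms] by blast
  qed
  finally show "flat_conn U G \<longleftrightarrow> (\<forall>p\<in>U. pd 0 (pd 1 f) p * f p = pd 0 f p * pd 1 f p)" .
qed

end
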